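(* Let $\mathbb{H}$ be a reproducing kernel Hilbert space with inner product $\langle\cdot,\cdot\rangle$ and feature map $\phi$, and let $(X,A,Y)$ be jointly distributed with $Y=\langle\phi(X),y\rangle$ and $A=\langle\phi(X),a\rangle$ for some nonzero $y,a\in\mathbb{H}$, with $\operatorname{Var}(Y),\operatorname{Var}(A)>0$; let $\rho_{YA}$ be the correlation coefficient of $Y$ and $A$. For $\lambda\ge 0$ define $$\mathbf{OPT}(\lambda):=\inf_{Z}\ \lambda\operatorname{Var}\mathbb{E}[A\mid Z]-\operatorname{Var}\mathbb{E}[Y\mid Z],$$ the infimum over all (possibly randomized) representations $Z=g(X)$. Then $$\mathbf{OPT}(\lambda)\ge\frac12\Big\{\lambda\operatorname{Var}(A)-\operatorname{Var}(Y)-\sqrt{\operatorname{Var}^2(Y)+\lambda^2\operatorname{Var}^2(A)-2\lambda\operatorname{Var}(A)\operatorname{Var}(Y)(2\rho_{YA}^2-1)}\Big\}.$$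
   Context: A (possibly randomized) representation is $Z=g(X,S)$ for a measurable $g$ and auxiliary randomness $S$ independent of $(X,A,Y)$. $\phi(X)$ is assumed to have finite second moment in $\mathbb{H}$. *)

theory Defs
  imports "HOL-Probability.Probability"
begin

definition cond_exp_given :: "'w measure \<Rightarrow> ('w \<Rightarrow> 'z) \<Rightarrow> 'z measure \<Rightarrow> ('w \<Rightarrow> real) \<Rightarrow> 'w \<Rightarrow> real" where
  "cond_exp_given M Z NZ f = real_cond_exp M (vimage_algebra (space M) Z NZ) f"

definition covariance :: "'w measure \<Rightarrow> ('w \<Rightarrow> real) \<Rightarrow> ('w \<Rightarrow> real) \<Rightarrow> real" where
  "covariance M f h = (\<integral>\<omega>. (f \<omega> - (\<integral>x. f x \<partial>M)) * (h \<omega> - (\<integral>x. h x \<partial>M)) \<partial>M)"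

definition correlation :: "'w measure \<Rightarrow> ('w \<Rightarrow> real) \<Rightarrow> ('w \<Rightarrow> real) \<Rightarrow> real" where
  "correlation M f h = covariance M f h / sqrt (prob_space.variance M f * prob_space.variance M h)"

end

theory Submission imports Defs begin

lemma sq_int_prod:
  fixes f g :: "'a \<Rightarrow> real"
  assumes "f \<in> borel_measurable M" "g \<in> borel_measurable M"
    "integrable M (\<lambda>x. (f x)\<^sup>2)" "integrable M (\<lambda>x. (g x)\<^sup>2)"
  shows "integrable M (\<lambda>x. f x * g x)"
proof -
  have 1: "integrable M (\<lambda>x. (f x)\<^sup>2 + (g x)\<^sup>2)" using assms by auto
  have 2: "(\<lambda>x. f x * g x) \<in> borel_measurable M" using assms by auto
  have 3: "AE x in M. norm (f x * g x) \<le> norm ((f x)\<^sup>2 + (g x)\<^sup>2)"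
  proof (rule AE_I2)
    fix x
    have "2 * \<bar>f x * g x\<bar> \<le> (f x)\<^sup>2 + (g x)\<^sup>2"
      using sum_squares_bound[of "\<bar>f x\<bar>" "\<bar>g x\<bar>"] by (simp add: abs_mult)
    then show "norm (f x * g x) \<le> norm ((f x)\<^sup>2 + (g x)\<^sup>2)" by simp
  qed
  show ?thesis by (rule Bochner_Integration.integrable_bound[OF 1 2 3])
qed

lemma int_prod_expand:
  fixes a1 b1 a2 b2 :: "'a \<Rightarrow> real"
  assumes m: "a1 \<in> borel_measurable M" "b1 \<in> borel_measurable M" "a2 \<in> borel_measurable M" "b2 \<in> borel_measurable M"
    and i: "integrable M (\<lambda>x. (a1 x)\<^sup>2)" "integrable M (\<lambda>x. (b1 x)\<^sup>2)"
     "integrable M (\<lambda>x. (a2 x)\<^sup>2)" "integrable M (\<lambda>x. (b2 x)\<^sup>2)"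
  shows "(\<integral>x. (a1 x + b1 x) * (a2 x + b2 x) \<partial>M) =
     (\<integral>x. a1 x * a2 x \<partial>M) + (\<integral>x. a1 x * b2 x \<partial>M) + (\<integral>x. b1 x * a2 x \<partial>M) + (\<integral>x. b1 x * b2 x \<partial>M)"
proof -
  have 1: "integrable M (\<lambda>x. a1 x * a2 x)" "integrable M (\<lambda>x. a1 x * b2 x)"
    "integrable M (\<lambda>x. b1 x * a2 x)" "integrable M (\<lambda>x. b1 x * b2 x)"
    using sq_int_prod m i by blast+
  have "(\<integral>x. (a1 x + b1 x) * (a2 x + b2 x) \<partial>M) = (\<integral>x. (a1 x * a2 x + a1 x * b2 x) + (b1 x * a2 x + b1 x * b2 x) \<partial>M)"
    by (simp add: algebra_simps)
  also have "\<dots> = (\<integral>x. a1 x * a2 x + a1 x * b2 x \<partial>M) + (\<integral>x. b1 x * a2 x + b1 x * b2 x \<partial>M)"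
    by (rule Bochner_Integration.integral_add; rule Bochner_Integration.integrable_add) (use 1 in auto)
  also have "\<dots> = (\<integral>x. a1 x * a2 x \<partial>M) + (\<integral>x. a1 x * b2 x \<partial>M) + ((\<integral>x. b1 x * a2 x \<partial>M) + (\<integral>x. b1 x * b2 x \<partial>M))"
    using 1 by (simp add: integral_add)
  finally show ?thesis by simp
qed

lemma int_CS:
  fixes f g :: "'a \<Rightarrow> real"
  assumes m: "f \<in> borel_measurable M" "g \<in> borel_measurable M"
    and i: "integrable M (\<lambda>x. (f x)\<^sup>2)" "integrable M (\<lambda>x. (g x)\<^sup>2)"
  shows "(\<integral>x. f x * g x \<partial>M)\<^sup>2 \<le> (\<integral>x. (f x)\<^sup>2 \<partial>M) * (\<integral>x. (g x)\<^sup>2 \<partial>M)"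
proof -
  define a where "a = (\<integral>x. (f x)\<^sup>2 \<partial>M)"
  define b where "b = (\<integral>x. f x * g x \<partial>M)"
  define d where "d = (\<integral>x. (g x)\<^sup>2 \<partial>M)"
  have q: "s\<^sup>2 * a + 2 * s * t * b + t\<^sup>2 * d \<ge> 0" for s t :: real
  proof -
    have m2: "(\<lambda>x. s * f x) \<in> borel_measurable M" "(\<lambda>x. t * g x) \<in> borel_measurable M" using m by auto
    have i2: "integrable M (\<lambda>x. (s * f x)\<^sup>2)" "integrable M (\<lambda>x. (t * g x)\<^sup>2)"
      using i by (auto simp: power_mult_distrib)
    have "0 \<le> (\<integral>x. (s * f x + t * g x) * (s * f x + t * g x) \<partial>M)" by simp
    also have "\<dots> = (\<integral>x. s * f x * (s * f x) \<partial>M) + (\<integral>x. s * f x * (t * g x) \<partial>M)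
       + (\<integral>x. t * g x * (s * f x) \<partial>M) + (\<integral>x. t * g x * (t * g x) \<partial>M)"
      by (rule int_prod_expand[OF m2 m2 i2 i2])
    also have "\<dots> = s\<^sup>2 * a + 2 * s * t * b + t\<^sup>2 * d"
    proof -
      have e1: "(\<integral>x. s * f x * (s * f x) \<partial>M) = s\<^sup>2 * a"
        unfolding a_def by (simp add: power2_eq_square mult_ac)
      have e2: "(\<integral>x. s * f x * (t * g x) \<partial>M) = s * t * b"
        unfolding b_def by (simp add: mult_ac)
      have e3: "(\<integral>x. t * g x * (s * f x) \<partial>M) = s * t * b"
        unfolding b_def by (simp add: mult_ac)
      have e4: "(\<integral>x. t * g x * (t * g x) \<partial>M) = t\<^sup>2 * d"
        unfolding d_def by (simp add: power2_eq_square mult_ac)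
      show ?thesis unfolding e1 e2 e3 e4 by simp
    qed
    finally show ?thesis .
  qed
  have a0: "a \<ge> 0" "d \<ge> 0" unfolding a_def d_def by auto
  show ?thesis
  proof (cases "a = 0")
    case True
    have "b = 0"
    proof (rule ccontr)
      assume "b \<noteq> 0"
      have "(-(1 + d) / (2*b))\<^sup>2 * a + 2 * (-(1 + d) / (2*b)) * 1 * b + 1\<^sup>2 * d \<ge> 0" by (rule q)
      with True \<open>b \<noteq> 0\<close> show False by (simp add: field_simps)
    qed
    then show ?thesis unfolding a_def[symmetric] b_def[symmetric] d_def[symmetric] using a0 by simp
  next
    case False
    have "(-b)\<^sup>2 * a + 2 * (-b) * a * b + a\<^sup>2 * d \<ge> 0" by (rule q)
    then have "a * (a * d - b\<^sup>2) \<ge> 0" by (simp add: algebra_simps power2_eq_square)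
    then have "a * d - b\<^sup>2 \<ge> 0" using False a0 by (simp add: zero_le_mult_iff)
    then show ?thesis unfolding a_def[symmetric] b_def[symmetric] d_def[symmetric] by simp
  qed
qed


lemma sq_int_diff:
  fixes f g :: "'a \<Rightarrow> real"
  assumes "f \<in> borel_measurable M" "g \<in> borel_measurable M"
    "integrable M (\<lambda>x. (f x)\<^sup>2)" "integrable M (\<lambda>x. (g x)\<^sup>2)"
  shows "integrable M (\<lambda>x. (f x - g x)\<^sup>2)"
proof -
  have "integrable M (\<lambda>x. (f x)\<^sup>2 - 2 * (f x * g x) + (g x)\<^sup>2)"
    using sq_int_prod[OF assms] assms by auto
  then show ?thesis by (simp add: power2_diff algebra_simps)
qed

lemma orth:
  fixes f h :: "'a \<Rightarrow> real"
  assumes SF: "sigma_finite_subalgebra M F"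
    and f: "f \<in> borel_measurable M" "integrable M (\<lambda>x. (f x)\<^sup>2)"
    and h: "h \<in> borel_measurable F" "integrable M (\<lambda>x. (h x)\<^sup>2)"
    and U: "integrable M (\<lambda>x. (real_cond_exp M F f x)\<^sup>2)"
  shows "(\<integral>x. h x * (f x - real_cond_exp M F f x) \<partial>M) = 0"
proof -
  interpret sigma_finite_subalgebra M F by (rule SF)
  have hM: "h \<in> borel_measurable M" by (rule measurable_from_subalg[OF subalg h(1)])
  have i1: "integrable M (\<lambda>x. h x * f x)" by (rule sq_int_prod[OF hM f(1) h(2) f(2)])
  have i2: "integrable M (\<lambda>x. h x * real_cond_exp M F f x)"
    by (rule sq_int_prod[OF hM _ h(2) U]) simp
  have e: "(\<integral>x. h x * real_cond_exp M F f x \<partial>M) = (\<integral>x. h x * f x \<partial>M)"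
    by (rule real_cond_exp_intg(2)[OF i1 h(1) f(1)])
  have "(\<integral>x. h x * (f x - real_cond_exp M F f x) \<partial>M) = (\<integral>x. h x * f x - h x * real_cond_exp M F f x \<partial>M)"
    by (simp add: algebra_simps)
  also have "\<dots> = (\<integral>x. h x * f x \<partial>M) - (\<integral>x. h x * real_cond_exp M F f x \<partial>M)"
    by (rule Bochner_Integration.integral_diff[OF i1 i2])
  finally show ?thesis using e by simp
qed

lemma cond_sq_int:
  fixes f :: "'a \<Rightarrow> real"
  assumes P: "prob_space M" and SF: "sigma_finite_subalgebra M F"
    and f: "f \<in> borel_measurable M" "integrable M (\<lambda>x. (f x)\<^sup>2)"
  shows "integrable M f" "integrable M (\<lambda>x. (real_cond_exp M F f x)\<^sup>2)"
proof -
  interpret prob_space M by (rule P)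
  interpret sigma_finite_subalgebra M F by (rule SF)
  show fi: "integrable M f" by (rule square_integrable_imp_integrable[OF f])
  show "integrable M (\<lambda>x. (real_cond_exp M F f x)\<^sup>2)"
    by (rule integrable_convex_cond_exp[where I=UNIV and q="\<lambda>x. x\<^sup>2"])
       (use fi f convex_power2 in auto)
qed

lemma real_final:
  fixes dd ee uu vv de uv lam p q c r :: real
  assumes nn: "dd \<ge> 0" "ee \<ge> 0" "uu \<ge> 0" "vv \<ge> 0"
    and cs: "de\<^sup>2 \<le> dd * ee" "uv\<^sup>2 \<le> uu * vv" and lam: "lam \<ge> 0"
    and pq: "p = dd + uu" "q = ee + vv" "c = de + uv" "p > 0" "q > 0"
    and r: "r = c / sqrt (q * p)"
  shows "lam * uu - vv \<ge> (1/2) * (lam * p - q - sqrt (q\<^sup>2 + lam\<^sup>2 * p\<^sup>2 - 2 * lam * p * q * (2 * r\<^sup>2 - 1)))"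
proof -
  have r2: "r\<^sup>2 = c\<^sup>2 / (q * p)" using r pq by (simp add: power_divide)
  define t where "t = lam * p - q"
  define \<Delta> where "\<Delta> = q\<^sup>2 + lam\<^sup>2 * p\<^sup>2 - 2 * lam * p * q * (2 * r\<^sup>2 - 1)"
  have D: "\<Delta> = t\<^sup>2 + 4 * lam * (p * q - c\<^sup>2)"
  proof -
    have qp: "q * p \<noteq> 0" using pq by simp
    have "2 * lam * p * q * (2 * r\<^sup>2 - 1) = 4 * lam * c\<^sup>2 - 2 * lam * p * q"
      unfolding r2 using qp by (simp add: field_simps)
    then show ?thesis unfolding \<Delta>_def t_def by (simp add: algebra_simps power2_eq_square) auto
  qed
  define m where "m = lam * uu - vv"
  have am: "\<bar>2 * lam * de * uv\<bar> \<le> lam\<^sup>2 * dd * uu + vv * ee"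
  proof -
    have "(2 * lam * de * uv)\<^sup>2 = 4 * lam\<^sup>2 * de\<^sup>2 * uv\<^sup>2" by (simp add: power_mult_distrib)
    also have "\<dots> \<le> 4 * lam\<^sup>2 * (dd * ee) * (uu * vv)"
      using cs by (intro mult_mono mult_left_mono) (auto simp: nn)
    also have "\<dots> = 4 * (lam\<^sup>2 * dd * uu) * (vv * ee)" by simp
    also have "\<dots> \<le> (lam\<^sup>2 * dd * uu + vv * ee)\<^sup>2"
      using zero_le_power2[of "lam\<^sup>2 * dd * uu - vv * ee"] unfolding power2_diff power2_sum by linarith
    finally have "(2 * lam * de * uv)\<^sup>2 \<le> (lam\<^sup>2 * dd * uu + vv * ee)\<^sup>2" .
    moreover have "lam\<^sup>2 * dd * uu + vv * ee \<ge> 0" using nn by simp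
    ultimately show ?thesis using abs_le_square_iff power2_abs by (metis abs_of_nonneg)
  qed
  have key: "lam * c\<^sup>2 \<le> (lam * p - m) * (q + m)"
  proof -
    have "lam * c\<^sup>2 = lam * de\<^sup>2 + 2 * lam * de * uv + lam * uv\<^sup>2" using pq by (simp add: power2_sum algebra_simps)
    also have "\<dots> \<le> lam * (dd * ee) + (lam\<^sup>2 * dd * uu + vv * ee) + lam * (uu * vv)"
      using cs lam am by (intro add_mono mult_left_mono) auto
    also have "\<dots> = (lam * p - m) * (q + m)" unfolding m_def using pq by (simp add: algebra_simps power2_eq_square)
    finally show ?thesis .
  qed
  have "(2 * m - t)\<^sup>2 \<le> \<Delta>"
    using key unfolding D t_def by (simp add: algebra_simps power2_eq_square)
  then have "sqrt ((2 * m - t)\<^sup>2) \<le> sqrt \<Delta>" by (rule real_sqrt_le_mono)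
  then have "\<bar>2 * m - t\<bar> \<le> sqrt \<Delta>" by simp
  then have "t - 2 * m \<le> sqrt \<Delta>" unfolding abs_le_iff by linarith
  then have "(1/2) * (t - sqrt \<Delta>) \<le> m" by (simp add: field_simps)
  then show ?thesis unfolding m_def \<Delta>_def t_def .
qed


lemma core:
  fixes f g :: "'a \<Rightarrow> real" and lam :: real
  assumes P: "prob_space M" and SF: "sigma_finite_subalgebra M F"
    and f: "f \<in> borel_measurable M" "integrable M (\<lambda>x. (f x)\<^sup>2)"
    and g: "g \<in> borel_measurable M" "integrable M (\<lambda>x. (g x)\<^sup>2)"
    and vf: "prob_space.variance M f > 0" and vg: "prob_space.variance M g > 0"
    and lam: "lam \<ge> 0"
  shows "lam * prob_space.variance M (real_cond_exp M F f)
           - prob_space.variance M (real_cond_exp M F g)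
         \<ge> (1/2) * (lam * prob_space.variance M f - prob_space.variance M g
              - sqrt ((prob_space.variance M g)\<^sup>2 + lam\<^sup>2 * (prob_space.variance M f)\<^sup>2
                  - 2 * lam * prob_space.variance M f * prob_space.variance M g
                      * (2 * (correlation M g f)\<^sup>2 - 1)))"
proof -
  interpret prob_space M by (rule P)
  interpret sigma_finite_subalgebra M F by (rule SF)
  define U where "U = real_cond_exp M F f"
  define V where "V = real_cond_exp M F g"
  define mf where "mf = expectation f"
  define mg where "mg = expectation g"
  have fi: "integrable M f" and Ui: "integrable M (\<lambda>x. (U x)\<^sup>2)"
    using cond_sq_int[OF P SF f] unfolding U_def by auto
  have gi: "integrable M g" and Vi: "integrable M (\<lambda>x. (V x)\<^sup>2)"
    using cond_sq_int[OF P SF g] unfolding V_def by auto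
  have EU: "expectation U = mf" unfolding U_def mf_def using real_cond_exp_int(2)[OF fi] .
  have EV: "expectation V = mg" unfolding V_def mg_def using real_cond_exp_int(2)[OF gi] .
  have UF: "U \<in> borel_measurable F" and VF: "V \<in> borel_measurable F"
    unfolding U_def V_def by auto
  have UM: "U \<in> borel_measurable M" and VM: "V \<in> borel_measurable M"
    unfolding U_def V_def by auto
  have ci: "integrable M (\<lambda>x. (c::real)\<^sup>2)" for c by simp
  define U0 where "U0 = (\<lambda>x. U x - mf)"
  define V0 where "V0 = (\<lambda>x. V x - mg)"
  define D where "D = (\<lambda>x. f x - U x)"
  define E where "E = (\<lambda>x. g x - V x)"
  have U0F: "U0 \<in> borel_measurable F" and V0F: "V0 \<in> borel_measurable F"
    unfolding U0_def V0_def using UF VF by auto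
  have U0M: "U0 \<in> borel_measurable M" and V0M: "V0 \<in> borel_measurable M"
    and DM: "D \<in> borel_measurable M" and EM: "E \<in> borel_measurable M"
    unfolding U0_def V0_def D_def E_def using UM VM f g by auto
  have U0i: "integrable M (\<lambda>x. (U0 x)\<^sup>2)" unfolding U0_def
    by (rule sq_int_diff[OF UM _ Ui ci]) simp
  have V0i: "integrable M (\<lambda>x. (V0 x)\<^sup>2)" unfolding V0_def
    by (rule sq_int_diff[OF VM _ Vi ci]) simp
  have Di: "integrable M (\<lambda>x. (D x)\<^sup>2)" unfolding D_def
    by (rule sq_int_diff[OF f(1) UM f(2) Ui])
  have Ei: "integrable M (\<lambda>x. (E x)\<^sup>2)" unfolding E_def
    by (rule sq_int_diff[OF g(1) VM g(2) Vi])
  have o1: "(\<integral>x. U0 x * D x \<partial>M) = 0" unfolding D_def U_def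
    by (rule orth[OF SF f U0F U0i]) (use Ui U_def in simp)
  have o2: "(\<integral>x. V0 x * D x \<partial>M) = 0" unfolding D_def U_def
    by (rule orth[OF SF f V0F V0i]) (use Ui U_def in simp)
  have o3: "(\<integral>x. U0 x * E x \<partial>M) = 0" unfolding E_def V_def
    by (rule orth[OF SF g U0F U0i]) (use Vi V_def in simp)
  have o4: "(\<integral>x. V0 x * E x \<partial>M) = 0" unfolding E_def V_def
    by (rule orth[OF SF g V0F V0i]) (use Vi V_def in simp)
  have o1': "(\<integral>x. D x * U0 x \<partial>M) = 0" using o1 by (simp add: mult.commute)
  have o2': "(\<integral>x. E x * V0 x \<partial>M) = 0" using o4 by (simp add: mult.commute)
  have o3': "(\<integral>x. E x * U0 x \<partial>M) = 0" using o3 by (simp add: mult.commute)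
  define dd where "dd = (\<integral>x. (D x)\<^sup>2 \<partial>M)"
  define ee where "ee = (\<integral>x. (E x)\<^sup>2 \<partial>M)"
  define uu where "uu = (\<integral>x. (U0 x)\<^sup>2 \<partial>M)"
  define vv where "vv = (\<integral>x. (V0 x)\<^sup>2 \<partial>M)"
  define de where "de = (\<integral>x. E x * D x \<partial>M)"
  define uv where "uv = (\<integral>x. V0 x * U0 x \<partial>M)"
  have sq: "(\<integral>x. h x * h x \<partial>M) = (\<integral>x. (h x)\<^sup>2 \<partial>M)" for h :: "'a \<Rightarrow> real"
    by (simp add: power2_eq_square)
  have varf: "variance f = dd + uu"
  proof -
    have pw: "(f x - mf)\<^sup>2 = (D x + U0 x) * (D x + U0 x)" for x
      unfolding D_def U0_def by (simp add: power2_eq_square)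
    have "variance f = (\<integral>x. (D x + U0 x) * (D x + U0 x) \<partial>M)"
      unfolding mf_def[symmetric] pw ..
    also have "\<dots> = dd + uu"
      unfolding int_prod_expand[OF DM U0M DM U0M Di U0i Di U0i] o1 o1' dd_def uu_def sq by simp
    finally show ?thesis .
  qed
  have varg: "variance g = ee + vv"
  proof -
    have pw: "(g x - mg)\<^sup>2 = (E x + V0 x) * (E x + V0 x)" for x
      unfolding E_def V0_def by (simp add: power2_eq_square)
    have "variance g = (\<integral>x. (E x + V0 x) * (E x + V0 x) \<partial>M)"
      unfolding mg_def[symmetric] pw ..
    also have "\<dots> = ee + vv"
      unfolding int_prod_expand[OF EM V0M EM V0M Ei V0i Ei V0i] o4 o2' ee_def vv_def sq by simp
    finally show ?thesis .
  qed
  have cov: "covariance M g f = de + uv"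
  proof -
    have pw: "(g x - mg) * (f x - mf) = (E x + V0 x) * (D x + U0 x)" for x
      unfolding E_def V0_def D_def U0_def by simp
    have "covariance M g f = (\<integral>x. (E x + V0 x) * (D x + U0 x) \<partial>M)"
      unfolding covariance_def mg_def[symmetric] mf_def[symmetric] pw ..
    also have "\<dots> = de + uv"
      unfolding int_prod_expand[OF EM V0M DM U0M Ei V0i Di U0i] de_def uv_def
      using o2 o3' by simp
    finally show ?thesis .
  qed
  have varU: "variance U = uu" unfolding uu_def U0_def EU by simp
  have varV: "variance V = vv" unfolding vv_def V0_def EV by simp
  have cs1: "de\<^sup>2 \<le> ee * dd" unfolding de_def ee_def dd_def by (rule int_CS[OF EM DM Ei Di])
  have cs2: "uv\<^sup>2 \<le> vv * uu" unfolding uv_def uu_def vv_def by (rule int_CS[OF V0M U0M V0i U0i])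
  have nn: "dd \<ge> 0" "ee \<ge> 0" "uu \<ge> 0" "vv \<ge> 0" unfolding dd_def ee_def uu_def vv_def by auto
  have corr: "correlation M g f = covariance M g f / sqrt (variance g * variance f)"
    unfolding correlation_def ..
  have cs1': "de\<^sup>2 \<le> dd * ee" using cs1 by (metis mult.commute)
  have cs2': "uv\<^sup>2 \<le> uu * vv" using cs2 by (metis mult.commute)
  note real_final[OF nn cs1' cs2' lam varf varg cov vf vg corr]
  note fin = this
  note a = varU[unfolded U_def] and b = varV[unfolded V_def]
  show ?thesis unfolding a b by (rule fin)
qed

theorem theorem6:
  fixes M :: "'w measure" and NX :: "'x measure" and NS :: "'s measure" and NZ :: "'z measure"
    and X :: "'w \<Rightarrow> 'x" and S :: "'w \<Rightarrow> 's" and g :: "'x \<times> 's \<Rightarrow> 'z"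
    and \<phi> :: "'x \<Rightarrow> 'h::{real_inner, complete_space}"
    and y a :: 'h and lam :: real
    and Y A :: "'w \<Rightarrow> real"
  defines "Y \<equiv> \<lambda>\<omega>. inner (\<phi> (X \<omega>)) y"
    and "A \<equiv> \<lambda>\<omega>. inner (\<phi> (X \<omega>)) a"
  assumes P: "prob_space M"
    and X_meas: "X \<in> M \<rightarrow>\<^sub>M NX"
    and S_meas: "S \<in> M \<rightarrow>\<^sub>M NS"
    and phi_meas: "\<phi> \<in> NX \<rightarrow>\<^sub>M borel"
    and g_meas: "g \<in> NX \<Otimes>\<^sub>M NS \<rightarrow>\<^sub>M NZ"
    and second_moment: "integrable M (\<lambda>\<omega>. (norm (\<phi> (X \<omega>)))\<^sup>2)"
    and indep: "prob_space.indep_set M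
        {S -` B \<inter> space M | B. B \<in> sets NS}
        {(\<lambda>\<omega>. (X \<omega>, A \<omega>, Y \<omega>)) -` C \<inter> space M | C. C \<in> sets (NX \<Otimes>\<^sub>M (borel \<Otimes>\<^sub>M borel))}"
    and y_nz: "y \<noteq> 0" and a_nz: "a \<noteq> 0"
    and varY: "prob_space.variance M Y > 0"
    and varA: "prob_space.variance M A > 0"
    and lam: "lam \<ge> 0"
  shows "lam * prob_space.variance M (cond_exp_given M (\<lambda>\<omega>. g (X \<omega>, S \<omega>)) NZ A)
           - prob_space.variance M (cond_exp_given M (\<lambda>\<omega>. g (X \<omega>, S \<omega>)) NZ Y)
         \<ge> (1/2) * (lam * prob_space.variance M A - prob_space.variance M Y
              - sqrt ((prob_space.variance M Y)\<^sup>2 + lam\<^sup>2 * (prob_space.variance M A)\<^sup>2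
                  - 2 * lam * prob_space.variance M A * prob_space.variance M Y
                      * (2 * (correlation M Y A)\<^sup>2 - 1)))"
proof -
  interpret prob_space M by (rule P)
  define Z where "Z = (\<lambda>\<omega>. g (X \<omega>, S \<omega>))"
  define F where "F = vimage_algebra (space M) Z NZ"
  have XS: "(\<lambda>\<omega>. (X \<omega>, S \<omega>)) \<in> M \<rightarrow>\<^sub>M NX \<Otimes>\<^sub>M NS"
    using X_meas S_meas by (rule measurable_Pair)
  have Zm: "Z \<in> M \<rightarrow>\<^sub>M NZ" unfolding Z_def
    using measurable_comp[OF XS g_meas] by (simp add: comp_def)
  have sub: "subalgebra M F"
    unfolding subalgebra_def F_def
  proof
    show "space (vimage_algebra (space M) Z NZ) = space M" by simp
    have "Z \<in> space M \<rightarrow> space NZ" using Zm by (auto dest: measurable_space)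
    then show "sets (vimage_algebra (space M) Z NZ) \<subseteq> sets M"
      using Zm by (auto simp: sets_vimage_algebra2 intro: measurable_sets)
  qed
  have SF: "sigma_finite_subalgebra M F"
    by (rule finite_measure_subalgebra_is_sigma_finite) (unfold_locales, rule sub)
  have phiX: "(\<lambda>\<omega>. \<phi> (X \<omega>)) \<in> borel_measurable M"
    using measurable_comp[OF X_meas phi_meas] by (simp add: comp_def)
  have meas: "(\<lambda>\<omega>. inner (\<phi> (X \<omega>)) b) \<in> borel_measurable M" for b
    by (rule borel_measurable_continuous_on[OF _ phiX]) (intro continuous_intros)
  have sqi: "integrable M (\<lambda>\<omega>. (inner (\<phi> (X \<omega>)) b)\<^sup>2)" for b
  proof -
    have 1: "integrable M (\<lambda>\<omega>. (norm b)\<^sup>2 * (norm (\<phi> (X \<omega>)))\<^sup>2)"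
      using second_moment by (rule integrable_mult_right)
    have 2: "(\<lambda>\<omega>. (inner (\<phi> (X \<omega>)) b)\<^sup>2) \<in> borel_measurable M" using meas[of b] by simp
    have 3: "AE \<omega> in M. norm ((inner (\<phi> (X \<omega>)) b)\<^sup>2) \<le> norm ((norm b)\<^sup>2 * (norm (\<phi> (X \<omega>)))\<^sup>2)"
    proof (rule AE_I2)
      fix \<omega>
      have "\<bar>inner (\<phi> (X \<omega>)) b\<bar> \<le> norm (\<phi> (X \<omega>)) * norm b" by (rule Cauchy_Schwarz_ineq2)
      then have "\<bar>inner (\<phi> (X \<omega>)) b\<bar>\<^sup>2 \<le> (norm (\<phi> (X \<omega>)) * norm b)\<^sup>2"
        by (rule power_mono) simp
      then show "norm ((inner (\<phi> (X \<omega>)) b)\<^sup>2) \<le> norm ((norm b)\<^sup>2 * (norm (\<phi> (X \<omega>)))\<^sup>2)"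
        by (simp add: power_mult_distrib mult.commute)
    qed
    show ?thesis by (rule Bochner_Integration.integrable_bound[OF 1 2 3])
  qed
  have "lam * prob_space.variance M (real_cond_exp M F A) - prob_space.variance M (real_cond_exp M F Y)
         \<ge> (1/2) * (lam * prob_space.variance M A - prob_space.variance M Y
              - sqrt ((prob_space.variance M Y)\<^sup>2 + lam\<^sup>2 * (prob_space.variance M A)\<^sup>2
                  - 2 * lam * prob_space.variance M A * prob_space.variance M Y
                      * (2 * (correlation M Y A)\<^sup>2 - 1)))"
    by (rule core[OF P SF]) (use meas sqi varA varY lam in \<open>simp_all add: A_def Y_def\<close>)
  then show ?thesis unfolding cond_exp_given_def F_def Z_def .
qed

end
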